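(* For every $\delta$ with $0<\delta<\gamma$ there exists an integer $K\ge1$ such that for every positive integer $B$, every pre-sorted online $B$-bounded space algorithm $ALG$ for the classic bin packing problem, and every positive integer $m$, there exists a sorted item sequence $I$ such that $OPT(I)=m$ and $ALG(I)>(\gamma-\delta)\cdot OPT(I)-B(K-1)$.
   Context: Define $\pi_1=2$ and $\pi_{i+1}=\pi_i(\pi_i-1)+1$ for $i\ge1$, and $\gamma=\sum_{i=1}^\infty\frac{1}{\pi_i-1}\approx1.69$. Classic bin packing: an item sequence $I=(a_1,\dots,a_n)\in(0,1]^n$ must be packed into bins of capacity $1$; $OPT(I)$ is the minimum number of non-empty bins, $ALG(I)$ the number used by $ALG$. $I$ is sorted if $a_1\ge\cdots\ge a_n$. A pre-sorted online algorithm first sorts the input in non-increasing order and then repeatedly packs the head (first) item of the currently remaining sorted sequence into a bin, each decision depending only on the items already packed and the current item, without seeing other remaining items. A bin is open if it contains an item and the algorithm may still pack items into it; closed bins never receive further items. A $B$-bounded space algorithm keeps at most $B$ open bins at any time. *)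

theory Defs
  imports Complex_Main
begin

(* pi_seq i = \<pi>_{i+1}: pi_seq 0 = 2, pi_seq (i+1) = pi_seq i * (pi_seq i - 1) + 1 *)
fun pi_seq :: "nat \<Rightarrow> nat" where
  "pi_seq 0 = 2"
| "pi_seq (Suc i) = pi_seq i * (pi_seq i - 1) + 1"

definition gamma_bp :: real where
  "gamma_bp = (\<Sum>i. 1 / (real (pi_seq i) - 1))"

definition sorted_items :: "real list \<Rightarrow> bool" where
  "sorted_items I \<longleftrightarrow> (\<forall>x\<in>set I. 0 < x \<and> x \<le> 1) \<and> sorted_wrt (\<ge>) I"

definition valid_packing :: "real list \<Rightarrow> (nat \<Rightarrow> nat) \<Rightarrow> bool" where
  "valid_packing I f \<longleftrightarrow>
     (\<forall>b. (\<Sum>i\<in>{i. i < length I \<and> f i = b}. I ! i) \<le> 1)"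

definition OPT :: "real list \<Rightarrow> nat" where
  "OPT I = (LEAST k. \<exists>f. valid_packing I f \<and> card (f ` {..<length I}) = k)"

(* Given the items already packed (in order) and the current item, it returns
   (b, C): the bin label b receiving the current item and a set C of bin
   labels that it closes (after packing the current item).  Its previous
   decisions are determined by the prefix, so this captures exactly the
   information the algorithm may use. *)
type_synonym online_alg = "real list \<Rightarrow> real \<Rightarrow> nat \<times> nat set"

definition alg_bin :: "online_alg \<Rightarrow> real list \<Rightarrow> nat \<Rightarrow> nat" where
  "alg_bin A I i = fst (A (take i I) (I ! i))"

definition alg_closed :: "online_alg \<Rightarrow> real list \<Rightarrow> nat \<Rightarrow> nat set" where
  "alg_closed A I j = (\<Union>i<j. snd (A (take i I) (I ! i)))"

definition alg_open :: "online_alg \<Rightarrow> real list \<Rightarrow> nat \<Rightarrow> nat set" where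
  "alg_open A I j = (alg_bin A I ` {..<j}) - alg_closed A I j"

definition bounded_run :: "nat \<Rightarrow> online_alg \<Rightarrow> real list \<Rightarrow> bool" where
  "bounded_run B A I \<longleftrightarrow>
     (\<forall>i < length I.
        alg_bin A I i \<notin> alg_closed A I i
      \<and> (\<Sum>j\<in>{j. j \<le> i \<and> alg_bin A I j = alg_bin A I i}. I ! j) \<le> 1
      \<and> card (alg_open A I (Suc i)) \<le> B)"

definition presorted_bounded_alg :: "nat \<Rightarrow> online_alg \<Rightarrow> bool" where
  "presorted_bounded_alg B A \<longleftrightarrow> (\<forall>I. sorted_items I \<longrightarrow> bounded_run B A I)"

definition ALG :: "online_alg \<Rightarrow> real list \<Rightarrow> nat" where
  "ALG A I = card (alg_bin A I ` {..<length I})"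

end

theory Submission
  imports Defs
begin

lemma pi_ge2: "pi_seq i \<ge> 2"
proof (induction i)
  case 0 then show ?case by simp
next
  case (Suc i)
  have "2 * 1 \<le> pi_seq i * (pi_seq i - 1)" using Suc by (intro mult_le_mono) auto
  then show ?case using Suc by simp
qed

lemma pi_real_suc: "real (pi_seq (Suc i)) - 1 = real (pi_seq i) * (real (pi_seq i) - 1)"
proof -
  have e: "pi_seq (Suc i) = pi_seq i * (pi_seq i - 1) + 1" by simp
  have d: "real (pi_seq i - 1) = real (pi_seq i) - 1" using pi_ge2[of i] by (simp add: of_nat_diff)
  show ?thesis unfolding e by (simp only: of_nat_add of_nat_mult of_nat_1 d) simp?
qed

lemma pi_mono: "mono pi_seq"
unfolding mono_iff_le_Suc
proof
  fix i
  have "pi_seq i * 1 \<le> pi_seq i * (pi_seq i - 1)" using pi_ge2[of i] by (intro mult_le_mono) auto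
  moreover have "pi_seq (Suc i) = pi_seq i * (pi_seq i - 1) + 1" by simp
  ultimately show "pi_seq i \<le> pi_seq (Suc i)" by linarith
qed

lemma pi_geom: "real (pi_seq i) - 1 \<ge> 2 ^ i"
proof (induction i)
  case 0 then show ?case by simp
next
  case (Suc i)
  have p: "real (pi_seq i) \<ge> 2" using pi_ge2[of i] by simp
  have "(2::real) ^ Suc i = 2 * 2 ^ i" by simp
  also have "\<dots> \<le> real (pi_seq i) * (real (pi_seq i) - 1)"
    using Suc p by (intro mult_mono) auto
  finally show ?case using pi_real_suc[of i] by (simp del: pi_seq.simps)
qed

lemma gamma_summable: "summable (\<lambda>i. 1 / (real (pi_seq i) - 1))"
proof (rule summable_comparison_test')
  show "summable (\<lambda>i. (1/2::real) ^ i)" by simp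
  fix i :: nat
  have g: "real (pi_seq i) - 1 \<ge> 2 ^ i" by (rule pi_geom)
  have pos: "0 < (real (pi_seq i) - 1) * 2^i" using pi_ge2[of i] by simp
  have "norm (1 / (real (pi_seq i) - 1)) = 1 / (real (pi_seq i) - 1)"
    using pi_ge2[of i] by simp
  also have "\<dots> \<le> 1 / 2 ^ i" using g pos by (intro divide_left_mono) auto
  also have "\<dots> = (1/2) ^ i" by (simp add: power_divide)
  finally show "norm (1 / (real (pi_seq i) - 1)) \<le> (1/2) ^ i" .
qed

lemma sum_inv: "(\<Sum>i<k. 1 / real (pi_seq i)) = 1 - 1 / (real (pi_seq k) - 1)"
proof (induction k)
  case 0 then show ?case by simp
next
  case (Suc k)
  have p: "real (pi_seq k) \<ge> 2" using pi_ge2[of k] by simp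
  have "(\<Sum>i<Suc k. 1 / real (pi_seq i)) = 1 - 1 / (real (pi_seq k) - 1) + 1 / real (pi_seq k)"
    using Suc by simp
  also have "\<dots> = 1 - 1 / (real (pi_seq k) * (real (pi_seq k) - 1))"
    using p by (simp add: field_simps)
  finally show ?case using pi_real_suc[of k] by (simp del: pi_seq.simps)
qed

lemma closed_mono: "j \<le> j' \<Longrightarrow> alg_closed A I j \<subseteq> alg_closed A I j'"
  unfolding alg_closed_def by (intro UN_mono) auto

lemma open_card:
  assumes "bounded_run B A I" "n \<le> length I"
  shows "card (alg_open A I n) \<le> B"
proof (cases n)
  case 0 then show ?thesis by (simp add: alg_open_def)
next
  case (Suc n') then show ?thesis using assms unfolding bounded_run_def by auto
qed

lemma old_bin_open:
  assumes br: "bounded_run B A I" and j: "j < length I" and t: "t \<le> j"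
    and b: "alg_bin A I j \<in> alg_bin A I ` {..<t}"
  shows "alg_bin A I j \<in> alg_open A I t"
proof -
  have "alg_bin A I j \<notin> alg_closed A I j" using br j unfolding bounded_run_def by blast
  then have "alg_bin A I j \<notin> alg_closed A I t" using closed_mono[OF t] by blast
  then show ?thesis using b unfolding alg_open_def by blast
qed

lemma fiber_bound:
  assumes br: "bounded_run B A I" and F: "F \<subseteq> {..<length I}"
    and hb: "\<forall>j\<in>F. alg_bin A I j = b" and hx: "\<forall>j\<in>F. I!j = x"
    and nn: "\<forall>j<length I. 0 \<le> I!j"
  shows "real (card F) * x \<le> 1"
proof (cases "F = {}")
  case True then show ?thesis by simp
next
  case False
  have fin: "finite F" using F finite_subset by blast
  define j0 where "j0 = Max F"
  have j: "j0 \<in> F" using Max_in fin False j0_def by blast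
  have jl: "j0 < length I" using F j by auto
  have sub: "F \<subseteq> {j. j \<le> j0 \<and> alg_bin A I j = alg_bin A I j0}"
    using hb j fin j0_def by auto
  have "real (card F) * x = (\<Sum>j\<in>F. I!j)" using hx by simp
  also have "\<dots> \<le> (\<Sum>j\<in>{j. j \<le> j0 \<and> alg_bin A I j = alg_bin A I j0}. I!j)"
  proof (rule sum_mono2)
    show "finite {j. j \<le> j0 \<and> alg_bin A I j = alg_bin A I j0}" by simp
    show "F \<subseteq> {j. j \<le> j0 \<and> alg_bin A I j = alg_bin A I j0}" by (rule sub)
    show "\<And>b. b \<in> {j. j \<le> j0 \<and> alg_bin A I j = alg_bin A I j0} - F \<Longrightarrow> 0 \<le> I ! b"
      using nn jl by auto
  qed
  also have "\<dots> \<le> 1" using br jl unfolding bounded_run_def by blast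
  finally show ?thesis .
qed

lemma phase_count:
  assumes br: "bounded_run B A I" and len: "length I = k*m" and i: "i<k"
    and hI: "\<forall>j<k*m. I!j = s (j div m)" and nn: "\<forall>j<length I. 0 \<le> I!j"
    and cap: "\<forall>c::nat. real c * s i \<le> 1 \<longrightarrow> c \<le> q"
  shows "m \<le> q * (card (alg_bin A I ` {i*m..<i*m+m} - alg_bin A I ` {..<i*m}) + B)"
proof -
  define P where "P = {i*m..<i*m+m}"
  define T where "T = alg_bin A I ` P - alg_bin A I ` {..<i*m}"
  have "Suc i * m \<le> k * m" using i by (intro mult_le_mono1) simp
  then have Pl: "\<forall>j\<in>P. j < k*m" unfolding P_def by auto
  have Pdiv: "\<forall>j\<in>P. j div m = i"
    unfolding P_def by (auto intro!: div_nat_eqI simp: algebra_simps)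
  have fib: "card {j\<in>P. alg_bin A I j = b} \<le> q" for b
  proof -
    have "real (card {j\<in>P. alg_bin A I j = b}) * s i \<le> 1"
    proof (rule fiber_bound[OF br])
      show "{j \<in> P. alg_bin A I j = b} \<subseteq> {..<length I}" using Pl len by auto
      show "\<forall>j\<in>{j \<in> P. alg_bin A I j = b}. alg_bin A I j = b" by simp
      show "\<forall>j\<in>{j \<in> P. alg_bin A I j = b}. I ! j = s i" using Pl Pdiv hI by auto
      show "\<forall>j<length I. 0 \<le> I ! j" by (rule nn)
    qed
    then show ?thesis using cap by blast
  qed
  have "m = card P" unfolding P_def by simp
  also have "P = (\<Union>b\<in>alg_bin A I ` P. {j\<in>P. alg_bin A I j = b})" by auto
  also have "card \<dots> \<le> (\<Sum>b\<in>alg_bin A I ` P. card {j\<in>P. alg_bin A I j = b})"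
    by (rule card_UN_le) (simp add: P_def)
  also have "\<dots> \<le> (\<Sum>b\<in>alg_bin A I ` P. q)" by (rule sum_mono) (rule fib)
  also have "\<dots> = q * card (alg_bin A I ` P)" by simp
  also have "card (alg_bin A I ` P) \<le> card T + B"
  proof -
    have sub: "alg_bin A I ` P \<subseteq> T \<union> alg_open A I (i*m)"
    proof
      fix b assume "b \<in> alg_bin A I ` P"
      then obtain j where j: "j \<in> P" "b = alg_bin A I j" by blast
      show "b \<in> T \<union> alg_open A I (i*m)"
      proof (cases "b \<in> alg_bin A I ` {..<i*m}")
        case True
        have "alg_bin A I j \<in> alg_open A I (i*m)"
          by (rule old_bin_open[OF br]) (use j Pl len True P_def in auto)
        then show ?thesis using j by simp
      next
        case False then show ?thesis using j unfolding T_def by blast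
      qed
    qed
    have fo: "finite (alg_open A I (i*m))" unfolding alg_open_def by simp
    have ft: "finite T" unfolding T_def P_def by simp
    have "card (alg_bin A I ` P) \<le> card (T \<union> alg_open A I (i*m))"
      using sub fo ft by (intro card_mono) auto
    also have "\<dots> \<le> card T + card (alg_open A I (i*m))" by (rule card_Un_le)
    also have "card (alg_open A I (i*m)) \<le> B"
      by (rule open_card[OF br]) (use i len in simp)
    finally show ?thesis by simp
  qed
  finally show ?thesis unfolding T_def P_def by simp
qed

theorem theorem6:
  fixes \<delta> :: real
  assumes "0 < \<delta>" and "\<delta> < gamma_bp"
  shows "\<exists>K::nat. K \<ge> 1 \<and>
           (\<forall>B::nat. B > 0 \<longrightarrow>
             (\<forall>A. presorted_bounded_alg B A \<longrightarrow>
               (\<forall>m::nat. m > 0 \<longrightarrow>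
                 (\<exists>I. sorted_items I \<and> OPT I = m \<and>
                   real (ALG A I) > (gamma_bp - \<delta>) * real (OPT I) - real B * (real K - 1)))))"
proof -
  define f where "f = (\<lambda>i. 1 / (real (pi_seq i) - 1))"
  have "(\<lambda>n. \<Sum>i<n. f i) \<longlonglongrightarrow> gamma_bp"
    unfolding gamma_bp_def f_def by (rule summable_LIMSEQ[OF gamma_summable])
  then have "eventually (\<lambda>n. gamma_bp - \<delta> < (\<Sum>i<n. f i)) sequentially"
    by (rule order_tendstoD(1)) (use assms in simp)
  then obtain N where N: "\<forall>n\<ge>N. gamma_bp - \<delta> < (\<Sum>i<n. f i)"
    by (auto simp: eventually_at_top_linorder)
  define k where "k = Suc N"
  have kpos: "k \<ge> 1" unfolding k_def by simp
  have "k \<ge> N" unfolding k_def by simp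
  then have hk: "gamma_bp - \<delta> < (\<Sum>i<k. f i)" using N by blast
  show ?thesis
  proof (intro exI[of _ "Suc k"] conjI allI impI)
    show "Suc k \<ge> 1" by simp
    fix B :: nat and A and m :: nat
    assume Bpos: "B > 0" and alg: "presorted_bounded_alg B A" and mpos: "m > 0"
    define eps where "eps = 1 / (real k * (real (pi_seq k) - 1))"
    define s where "s = (\<lambda>i. 1 / real (pi_seq i) + eps)"
    define I where "I = map (\<lambda>j. s (j div m)) [0..<k*m]"
    have "(2::real) ^ 1 \<le> 2 ^ k" using kpos by (intro power_increasing) auto
    then have pk: "real (pi_seq k) - 1 \<ge> 2" using pi_geom[of k] by simp
    have kr: "real k \<ge> 1" using kpos by simp
    have eps_pos: "eps > 0" unfolding eps_def using pk kr by simp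
    have "real k * (real (pi_seq k) - 1) \<ge> 1 * 2" using pk kr by (intro mult_mono) auto
    then have eps_le: "eps \<le> 1/2" unfolding eps_def by (simp add: field_simps)
    have pi2: "real (pi_seq i) \<ge> 2" for i using pi_ge2[of i] by simp
    have s_pos: "0 < s i" for i unfolding s_def using eps_pos pi2[of i]
      by (simp add: add_pos_pos)
    have s_le: "s i \<le> 1" for i
    proof -
      have "1 / real (pi_seq i) \<le> 1/2" using pi2[of i] by simp
      then show ?thesis unfolding s_def using eps_le by simp
    qed
    have s_anti: "s i' \<le> s i" if "i \<le> i'" for i i'
    proof -
      have "pi_seq i \<le> pi_seq i'" using pi_mono that by (simp add: monoD)
      then have "1 / real (pi_seq i') \<le> 1 / real (pi_seq i)"
        using pi2[of i] by (intro divide_left_mono) auto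
      then show ?thesis unfolding s_def by simp
    qed
    have s_sum: "(\<Sum>i<k. s i) = 1"
    proof -
      have "(\<Sum>i<k. s i) = (\<Sum>i<k. 1 / real (pi_seq i)) + real k * eps"
        unfolding s_def by (simp add: sum.distrib)
      also have "real k * eps = 1 / (real (pi_seq k) - 1)"
        unfolding eps_def using kr pk by (simp add: field_simps)
      finally show ?thesis using sum_inv[of k] by simp
    qed
    have s0: "s 0 > 1/2" unfolding s_def using eps_pos by simp
    have cap: "\<forall>c::nat. real c * s i \<le> 1 \<longrightarrow> c \<le> pi_seq i - 1" for i
    proof (intro allI impI)
      fix c :: nat assume c: "real c * s i \<le> 1"
      show "c \<le> pi_seq i - 1"
      proof (rule ccontr)
        assume "\<not> c \<le> pi_seq i - 1"
        then have "real c \<ge> real (pi_seq i)" by simp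
        then have "real (pi_seq i) * s i \<le> real c * s i" using s_pos[of i] by (intro mult_right_mono) auto
        moreover have "real (pi_seq i) * s i = 1 + real (pi_seq i) * eps"
          unfolding s_def using pi2[of i] by (simp add: field_simps)
        moreover have "real (pi_seq i) * eps > 0" using pi2[of i] eps_pos by simp
        ultimately show False using c by linarith
      qed
    qed
    have len: "length I = k*m" unfolding I_def by simp
    have hI: "\<forall>j<k*m. I!j = s (j div m)" unfolding I_def by simp
    have nn: "\<forall>j<length I. 0 \<le> I!j" using hI len s_pos by (simp add: less_imp_le)
    have sorted: "sorted_items I"
      unfolding sorted_items_def
    proof (intro conjI)
      show "\<forall>x\<in>set I. 0 < x \<and> x \<le> 1" unfolding I_def using s_pos s_le by auto
      show "sorted_wrt (\<ge>) I"
        unfolding sorted_wrt_iff_nth_less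
      proof (intro allI impI)
        fix i j assume ij: "i < j" "j < length I"
        then have "I ! j = s (j div m)" "I ! i = s (i div m)" using hI len by auto
        moreover have "i div m \<le> j div m" using ij by (intro div_le_mono) simp
        ultimately show "I ! j \<le> I ! i" using s_anti by simp
      qed
    qed
    have opt: "OPT I = m"
      unfolding OPT_def
    proof (rule Least_equality)
      show "\<exists>g. valid_packing I g \<and> card (g ` {..<length I}) = m"
      proof (intro exI conjI)
        show "valid_packing I (\<lambda>j. j mod m)"
          unfolding valid_packing_def
        proof
          fix b
          show "(\<Sum>i\<in>{i. i < length I \<and> i mod m = b}. I ! i) \<le> 1"
          proof (cases "b < m")
            case True
            have eq: "{i. i < length I \<and> i mod m = b} = (\<lambda>t. t*m+b) ` {..<k}"
            proof
              show "{i. i < length I \<and> i mod m = b} \<subseteq> (\<lambda>t. t*m+b) ` {..<k}"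
              proof
                fix j assume "j \<in> {i. i < length I \<and> i mod m = b}"
                then have j: "j < k*m" "j mod m = b" using len by auto
                have "j = (j div m)*m + b" using j(2) by (metis div_mult_mod_eq)
                moreover have "j div m < k" using j(1) by (metis less_mult_imp_div_less)
                ultimately show "j \<in> (\<lambda>t. t*m+b) ` {..<k}" by blast
              qed
              show "(\<lambda>t. t*m+b) ` {..<k} \<subseteq> {i. i < length I \<and> i mod m = b}"
              proof
                fix j assume "j \<in> (\<lambda>t. t*m+b) ` {..<k}"
                then obtain t where t: "t < k" "j = t*m+b" by blast
                have "Suc t * m \<le> k * m" using t by (intro mult_le_mono1) simp
                then have "j < k*m" using t True by simp
                moreover have "j mod m = b" using t True by simp
                ultimately show "j \<in> {i. i < length I \<and> i mod m = b}" using len by simp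
              qed
            qed
            have inj: "inj_on (\<lambda>t. t*m+b) {..<k}" using mpos by (auto simp: inj_on_def)
            have "(\<Sum>i\<in>{i. i < length I \<and> i mod m = b}. I ! i) = (\<Sum>t<k. I ! (t*m+b))"
              unfolding eq by (simp add: sum.reindex[OF inj])
            also have "\<dots> = (\<Sum>t<k. s t)"
            proof (rule sum.cong)
              fix t assume t: "t \<in> {..<k}"
              have "Suc t * m \<le> k * m" using t by (intro mult_le_mono1) simp
              then have "t*m+b < k*m" using True by simp
              then have "I ! (t*m+b) = s ((t*m+b) div m)" using hI by simp
              also have "(t*m+b) div m = t" using True by simp
              finally show "I ! (t*m+b) = s t" .
            qed simp
            finally show ?thesis using s_sum by simp
          next
            case False
            then have emp: "{i. i < length I \<and> i mod m = b} = {}" using mpos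
              by (auto simp: not_less) (metis mod_less_divisor not_le)
            show ?thesis unfolding emp by simp
          qed
        qed
        show "card ((\<lambda>j. j mod m) ` {..<length I}) = m"
        proof -
          have "(\<lambda>j. j mod m) ` {..<length I} = {..<m}"
          proof
            show "(\<lambda>j. j mod m) ` {..<length I} \<subseteq> {..<m}" using mpos by auto
            show "{..<m} \<subseteq> (\<lambda>j. j mod m) ` {..<length I}"
            proof
              fix b assume b: "b \<in> {..<m}"
              have mk: "m \<le> k*m" using kpos by simp
              have "b < m" using b by simp
              then have "b < length I" using mk len by linarith
              moreover have "b mod m = b" using b by simp
              ultimately show "b \<in> (\<lambda>j. j mod m) ` {..<length I}" by (metis imageI lessThan_iff)
            qed
          qed
          then show ?thesis by simp
        qed
      qed
    next
      fix y assume "\<exists>g. valid_packing I g \<and> card (g ` {..<length I}) = y"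
      then obtain g where g: "valid_packing I g" "card (g ` {..<length I}) = y" by blast
      have inj: "inj_on g {..<m}"
      proof (rule inj_onI, rule ccontr)
        fix j j' assume j: "j \<in> {..<m}" "j' \<in> {..<m}" "g j = g j'" "j \<noteq> j'"
        have mk: "m \<le> k*m" using kpos by simp
        have "j < m" "j' < m" using j by auto
        then have jl: "j < length I" "j' < length I" using mk len by linarith+
        have Ij: "I ! j = s 0" "I ! j' = s 0" using j hI len jl by auto
        have "(\<Sum>i\<in>{j, j'}. I ! i) \<le> (\<Sum>i\<in>{i. i < length I \<and> g i = g j}. I ! i)"
          by (rule sum_mono2) (use jl j nn in auto)
        also have "\<dots> \<le> 1" using g(1) unfolding valid_packing_def by blast
        finally have "I ! j + I ! j' \<le> 1" using j by simp
        then show False using Ij s0 by simp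
      qed
      have "m = card (g ` {..<m})" using card_image[OF inj] by simp
      also have "\<dots> \<le> card (g ` {..<length I})"
      proof (rule card_mono)
        show "finite (g ` {..<length I})" by simp
        have mk: "m \<le> k*m" using kpos by simp
        then show "g ` {..<m} \<subseteq> g ` {..<length I}" using len by (metis image_mono lessThan_subset_iff)
      qed
      finally show "m \<le> y" using g(2) by simp
    qed
    have br: "bounded_run B A I" using alg sorted unfolding presorted_bounded_alg_def by blast
    define T where "T = (\<lambda>i. alg_bin A I ` {i*m..<i*m+m} - alg_bin A I ` {..<i*m})"
    have cntr: "real m * f i - real B \<le> real (card (T i))" if i: "i < k" for i
    proof -
      have "m \<le> (pi_seq i - 1) * (card (T i) + B)"
        unfolding T_def by (rule phase_count[OF br len i hI nn cap])
      then have "real m \<le> real (pi_seq i - 1) * (real (card (T i)) + real B)"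
        by (metis of_nat_add of_nat_le_iff of_nat_mult)
      also have "real (pi_seq i - 1) = real (pi_seq i) - 1" using pi_ge2[of i] by (simp add: of_nat_diff)
      finally have "real m \<le> (real (pi_seq i) - 1) * (real (card (T i)) + real B)" .
      then have "real m / (real (pi_seq i) - 1) \<le> real (card (T i)) + real B"
        using pi2[of i] by (simp add: pos_divide_le_eq mult.commute)
      then show ?thesis unfolding f_def by simp
    qed
    have disj: "T i \<inter> T i' = {}" if "i < i'" for i i'
    proof -
      have "Suc i * m \<le> i' * m" using that by (intro mult_le_mono1) simp
      then have "T i \<subseteq> alg_bin A I ` {..<i'*m}" unfolding T_def by auto
      then show ?thesis unfolding T_def by blast
    qed
    have "(\<Sum>i<k. real m * f i - real B) \<le> (\<Sum>i<k. real (card (T i)))"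
      by (rule sum_mono) (use cntr in simp)
    also have "\<dots> = real (\<Sum>i<k. card (T i))" by simp
    also have "(\<Sum>i<k. card (T i)) = card (\<Union>i<k. T i)"
    proof (rule card_UN_disjoint[symmetric])
      show "finite {..<k}" by simp
      show "\<forall>i\<in>{..<k}. finite (T i)" unfolding T_def by simp
      show "\<forall>i\<in>{..<k}. \<forall>j\<in>{..<k}. i \<noteq> j \<longrightarrow> T i \<inter> T j = {}"
        using disj by (metis Int_commute linorder_neqE_nat)
    qed
    also have "card (\<Union>i<k. T i) \<le> ALG A I"
      unfolding ALG_def
    proof (rule card_mono)
      show "finite (alg_bin A I ` {..<length I})" by simp
      show "(\<Union>i<k. T i) \<subseteq> alg_bin A I ` {..<length I}"
      proof
        fix b assume "b \<in> (\<Union>i<k. T i)"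
        then obtain i j where ij: "i < k" "j \<in> {i*m..<i*m+m}" "b = alg_bin A I j"
          unfolding T_def by blast
        have "Suc i * m \<le> k * m" using ij by (intro mult_le_mono1) simp
        then have "j < length I" using ij len by simp
        then show "b \<in> alg_bin A I ` {..<length I}" using ij by blast
      qed
    qed
    finally have main: "(\<Sum>i<k. real m * f i - real B) \<le> real (ALG A I)" by simp
    have "(\<Sum>i<k. real m * f i - real B) = real m * (\<Sum>i<k. f i) - real B * real k"
      by (simp add: sum_subtractf sum_distrib_left)
    moreover have "(gamma_bp - \<delta>) * real m < real m * (\<Sum>i<k. f i)"
      using hk mpos by (simp add: mult.commute)
    ultimately have "real (ALG A I) > (gamma_bp - \<delta>) * real (OPT I) - real B * (real (Suc k) - 1)"
      using main opt by simp
    then show "\<exists>I. sorted_items I \<and> OPT I = m \<and>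
                   real (ALG A I) > (gamma_bp - \<delta>) * real (OPT I) - real B * (real (Suc k) - 1)"
      using sorted opt by blast
  qed
qed

end
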